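(* Let $\kappa>0$ and consider one of the following reference solutions $t\mapsto e^{i\omega t}U_*$ of the system (H): (i) $\tau=-1$: $U_*=\frac{1}{\sqrt2}(1,-1)$, $\omega=\frac\kappa2-2$ (any $\kappa>0$); (ii) $\tau=+1$ and $0<\kappa<2$: $U_*=\frac{1}{\sqrt2}(1,1)$, $\omega=\frac\kappa2$; (iii) $\kappa>2$ and $\tau\in\{+1,-1\}$: $U_*=(\alpha_\tau,\beta_\tau)$, $\omega=\kappa-1$. Then in each case the reference solution is spectrally stable and orbitally stable.
   Context: Let $\kappa>0$. System (H) is the ODE system for $u=(u_0,u_1):\mathbb R\to\mathbb C^2$: $i u_0'=u_0-u_1-\kappa|u_0|^2u_0$, $\; i u_1'=u_1-u_0-\kappa|u_1|^2u_1$. For $\kappa>2$ and $\tau\in\{\pm1\}$ set $\alpha_\tau=\frac{\sqrt{\kappa+2}-\tau\sqrt{\kappa-2}}{2\sqrt\kappa}$, $\beta_\tau=\frac{\sqrt{\kappa+2}+\tau\sqrt{\kappa-2}}{2\sqrt\kappa}$. For real $U_*=(U_{*0},U_{*1})$ with $|U_{*0}|^2+|U_{*1}|^2=1$ and $\omega$ as listed, $t\mapsto e^{i\omega t}U_*$ solves (H). Linearization: writing $u_j=e^{i\omega t}(U_{*j}+v_j)$ and keeping linear terms gives $i v_j'=(1+\omega-\kappa U_{*j}^2)v_j-v_{1-j}-2\kappa U_{*j}^2\,\mathrm{Re}(v_j)$, $j=0,1$; with $v_j=q_j+ip_j$ this is $X'=\mathbb L X$ for $X=(q_0,p_0,q_1,p_1)\in\mathbb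 R^4$ and a real $4\times4$ matrix $\mathbb L$. The reference solution is spectrally stable if every eigenvalue of $\mathbb L$ has nonpositive real part, spectrally unstable otherwise. The reference solution is orbitally stable if for every $\epsilon>0$ there is $\delta>0$ such that every solution $u$ of (H) with $|u(0)-U_*|\le\delta$ satisfies $\inf_{\theta\in\mathbb R}|u(t)-e^{i\theta}U_*|\le\epsilon$ for all $t\ge0$; orbitally unstable otherwise. *)

theory Defs
  imports "HOL-Analysis.Analysis"
begin

text \<open>C^2 is modelled as complex \<times> complex, whose norm is the Euclidean norm.\<close>
definition solves_H :: "real \<Rightarrow> (real \<Rightarrow> complex \<times> complex) \<Rightarrow> bool" where
  "solves_H \<kappa> u \<longleftrightarrow> (\<forall>t. \<exists>d. (u has_vector_derivative d) (at t) \<and>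
      \<i> * fst d = fst (u t) - snd (u t) - complex_of_real (\<kappa> * (cmod (fst (u t)))\<^sup>2) * fst (u t) \<and>
      \<i> * snd d = snd (u t) - fst (u t) - complex_of_real (\<kappa> * (cmod (snd (u t)))\<^sup>2) * snd (u t))"

definition alpha :: "real \<Rightarrow> real \<Rightarrow> real" where
  "alpha \<kappa> \<tau> = (sqrt (\<kappa> + 2) - \<tau> * sqrt (\<kappa> - 2)) / (2 * sqrt \<kappa>)"

definition beta :: "real \<Rightarrow> real \<Rightarrow> real" where
  "beta \<kappa> \<tau> = (sqrt (\<kappa> + 2) + \<tau> * sqrt (\<kappa> - 2)) / (2 * sqrt \<kappa>)"

definition lin_rhs :: "real \<Rightarrow> real \<Rightarrow> real \<times> real \<Rightarrow> complex \<times> complex \<Rightarrow> complex \<times> complex" where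
  "lin_rhs \<kappa> \<omega> U v =
     (complex_of_real (1 + \<omega> - \<kappa> * (fst U)\<^sup>2) * fst v - snd v
        - complex_of_real (2 * \<kappa> * (fst U)\<^sup>2 * Re (fst v)),
      complex_of_real (1 + \<omega> - \<kappa> * (snd U)\<^sup>2) * snd v - fst v
        - complex_of_real (2 * \<kappa> * (snd U)\<^sup>2 * Re (snd v)))"

definition to_X :: "complex \<times> complex \<Rightarrow> real^4" where
  "to_X v = vector [Re (fst v), Im (fst v), Re (snd v), Im (snd v)]"

definition from_X :: "real^4 \<Rightarrow> complex \<times> complex" where
  "from_X X = (Complex (X$1) (X$2), Complex (X$3) (X$4))"

text \<open>The real 4x4 matrix L with X' = L X  (v' = -i G(v), written in real coordinates).\<close>
definition linL :: "real \<Rightarrow> real \<Rightarrow> real \<times> real \<Rightarrow> real^4^4" where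
  "linL \<kappa> \<omega> U = matrix (\<lambda>X. to_X (let w = lin_rhs \<kappa> \<omega> U (from_X X) in (- \<i> * fst w, - \<i> * snd w)))"

definition eigenvalue_real_matrix :: "real^'n^'n \<Rightarrow> complex \<Rightarrow> bool" where
  "eigenvalue_real_matrix A \<mu> \<longleftrightarrow>
     (\<exists>v::complex^'n. v \<noteq> 0 \<and> (map_matrix complex_of_real A) *v v = \<mu> *s v)"

definition spectrally_stable :: "real \<Rightarrow> real \<Rightarrow> real \<times> real \<Rightarrow> bool" where
  "spectrally_stable \<kappa> \<omega> U \<longleftrightarrow>
     (\<forall>\<mu>. eigenvalue_real_matrix (linL \<kappa> \<omega> U) \<mu> \<longrightarrow> Re \<mu> \<le> 0)"

definition cvec :: "real \<times> real \<Rightarrow> complex \<times> complex" where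
  "cvec U = (complex_of_real (fst U), complex_of_real (snd U))"

definition orbitally_stable :: "real \<Rightarrow> real \<times> real \<Rightarrow> bool" where
  "orbitally_stable \<kappa> U \<longleftrightarrow>
     (\<forall>\<epsilon>>0. \<exists>\<delta>>0. \<forall>u. solves_H \<kappa> u \<and> norm (u 0 - cvec U) \<le> \<delta> \<longrightarrow>
        (\<forall>t\<ge>0. (INF \<theta>::real. norm (u t - (cis \<theta> * fst (cvec U), cis \<theta> * snd (cvec U)))) \<le> \<epsilon>))"

end

theory Submission
  imports Defs
begin


definition "q0 p = Re (fst p)"
definition "p0 p = Im (fst p)"
definition "q1 p = Re (snd p)"
definition "p1 p = Im (snd p)"

lemma comp_deriv:
  assumes "(u has_vector_derivative d) (at t)"
  shows "((\<lambda>t. q0 (u t)) has_real_derivative Re (fst d)) (at t)"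
    "((\<lambda>t. p0 (u t)) has_real_derivative Im (fst d)) (at t)"
    "((\<lambda>t. q1 (u t)) has_real_derivative Re (snd d)) (at t)"
    "((\<lambda>t. p1 (u t)) has_real_derivative Im (snd d)) (at t)"
proof -
  have bl1: "bounded_linear (\<lambda>x::complex\<times>complex. Re (fst x))"
    by (intro bounded_linear_compose[OF bounded_linear_Re] bounded_linear_fst)
  have bl2: "bounded_linear (\<lambda>x::complex\<times>complex. Im (fst x))"
    by (intro bounded_linear_compose[OF bounded_linear_Im] bounded_linear_fst)
  have bl3: "bounded_linear (\<lambda>x::complex\<times>complex. Re (snd x))"
    by (intro bounded_linear_compose[OF bounded_linear_Re] bounded_linear_snd)
  have bl4: "bounded_linear (\<lambda>x::complex\<times>complex. Im (snd x))"
    by (intro bounded_linear_compose[OF bounded_linear_Im] bounded_linear_snd)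
  show "((\<lambda>t. q0 (u t)) has_real_derivative Re (fst d)) (at t)"
    using bounded_linear.has_vector_derivative[OF bl1 assms]
    by (simp add: q0_def has_real_derivative_iff_has_vector_derivative)
  show "((\<lambda>t. p0 (u t)) has_real_derivative Im (fst d)) (at t)"
    using bounded_linear.has_vector_derivative[OF bl2 assms]
    by (simp add: p0_def has_real_derivative_iff_has_vector_derivative)
  show "((\<lambda>t. q1 (u t)) has_real_derivative Re (snd d)) (at t)"
    using bounded_linear.has_vector_derivative[OF bl3 assms]
    by (simp add: q1_def has_real_derivative_iff_has_vector_derivative)
  show "((\<lambda>t. p1 (u t)) has_real_derivative Im (snd d)) (at t)"
    using bounded_linear.has_vector_derivative[OF bl4 assms]
    by (simp add: p1_def has_real_derivative_iff_has_vector_derivative)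
qed

definition "NN p = q0 p ^ 2 + p0 p ^ 2 + q1 p ^ 2 + p1 p ^ 2"
definition "XX p = 2 * (q0 p * q1 p + p0 p * p1 p)"
definition "YY p = 2 * (p0 p * q1 p - q0 p * p1 p)"
definition "ZZ p = q0 p ^ 2 + p0 p ^ 2 - q1 p ^ 2 - p1 p ^ 2"
definition "GG k p = XX p + k * (ZZ p)^2 / 4"

lemma cmod_sq: "(cmod z)^2 = (Re z)^2 + (Im z)^2"
  by (simp add: cmod_def)

lemma conserved:
  assumes "solves_H k u"
  shows "NN (u t) = NN (u 0)" "GG k (u t) = GG k (u 0)"
proof -
  have D: "((\<lambda>t. NN (u t)) has_real_derivative 0) (at t) \<and> ((\<lambda>t. GG k (u t)) has_real_derivative 0) (at t)" for t
  proof -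
    obtain d where hd: "(u has_vector_derivative d) (at t)"
      and e0: "\<i> * fst d = fst (u t) - snd (u t) - complex_of_real (k * (cmod (fst (u t)))\<^sup>2) * fst (u t)"
      and e1: "\<i> * snd d = snd (u t) - fst (u t) - complex_of_real (k * (cmod (snd (u t)))\<^sup>2) * snd (u t)"
      using assms unfolding solves_H_def by blast
    note cd = comp_deriv[OF hd]
    define a where "a = q0 (u t)" define b where "b = p0 (u t)"
    define c where "c = q1 (u t)" define e where "e = p1 (u t)"
    have r0: "Re (fst d) = b - e - k*(a^2+b^2)*b" "Im (fst d) = -(a - c - k*(a^2+b^2)*a)"
      using arg_cong[OF e0, of Re] arg_cong[OF e0, of Im]
      by (simp_all add: a_def b_def c_def e_def q0_def p0_def q1_def p1_def cmod_sq)
    have r1: "Re (snd d) = e - b - k*(c^2+e^2)*e" "Im (snd d) = -(c - a - k*(c^2+e^2)*c)"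
      using arg_cong[OF e1, of Re] arg_cong[OF e1, of Im]
      by (simp_all add: a_def b_def c_def e_def q0_def p0_def q1_def p1_def cmod_sq)
    show ?thesis
    proof
      show "((\<lambda>t. NN (u t)) has_real_derivative 0) (at t)"
        unfolding NN_def
        using cd by (auto intro!: derivative_eq_intros simp: r0 r1 a_def[symmetric] b_def[symmetric] c_def[symmetric] e_def[symmetric] algebra_simps power2_eq_square)
      show "((\<lambda>t. GG k (u t)) has_real_derivative 0) (at t)"
        unfolding GG_def XX_def ZZ_def
        using cd by (auto intro!: derivative_eq_intros simp: r0 r1 a_def[symmetric] b_def[symmetric] c_def[symmetric] e_def[symmetric] field_simps power2_eq_square)
    qed
  qed
  show "NN (u t) = NN (u 0)" by (rule DERIV_isconst_all[of "\<lambda>t. NN (u t)"]) (use D in auto)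
  show "GG k (u t) = GG k (u 0)" by (rule DERIV_isconst_all[of "\<lambda>t. GG k (u t)"]) (use D in auto)
qed

lemma stokes_id: "(XX p)^2 + (YY p)^2 + (ZZ p)^2 = (NN p)^2"
  by (simp add: XX_def YY_def ZZ_def NN_def power2_eq_square algebra_simps)

lemma sq_le_lemma:
  fixes s NN0 :: real assumes "s \<ge> 0"
  shows "NN0 + 1 - 2 * s \<le> (1 - s^2)^2 + abs (NN0 - s^2)"
proof -
  have "(1-s)^2 \<le> (1 - s^2)^2"
  proof -
    have "(1 - s^2)^2 = (1-s)^2 * (1+s)^2" by (simp add: power2_eq_square algebra_simps)
    moreover have "(1+s)^2 \<ge> 1" using assms mult_nonneg_nonneg[OF assms assms] by (simp add: power2_eq_square algebra_simps)
    moreover have "(1-s)^2 \<ge> 0" by simp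
    ultimately show ?thesis by (metis mult_left_mono mult.right_neutral)
  qed
  moreover have "NN0 + 1 - 2 * s = (1-s)^2 + (NN0 - s^2)" by (simp add: power2_eq_square algebra_simps)
  ultimately show ?thesis by linarith
qed

lemma dist_bound:
  assumes U: "U0^2 + U1^2 = 1"
  shows "(INF \<theta>::real. norm (p - (cis \<theta> * fst (cvec (U0,U1)), cis \<theta> * snd (cvec (U0,U1)))))
     \<le> sqrt ((1 - (NN p + 2*U0*U1*XX p + (U0^2-U1^2)*ZZ p)/2)^2
          + \<bar>NN p - (NN p + 2*U0*U1*XX p + (U0^2-U1^2)*ZZ p)/2\<bar>)"
    (is "?I \<le> sqrt ((1 - ?m)^2 + \<bar>NN p - ?m\<bar>)")
proof -
  define a where "a = U0 * q0 p + U1 * q1 p"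
  define b where "b = U0 * p0 p + U1 * p1 p"
  define w where "w = Complex a b"
  define s where "s = cmod w"
  have s2: "s^2 = a^2 + b^2" by (simp add: s_def w_def cmod_def)
  have sm: "s^2 = ?m"
  proof -
    have "a^2 + b^2 - ?m = NN p * (U0^2 + U1^2 - 1) / 2"
      unfolding a_def b_def NN_def XX_def ZZ_def by (simp add: power2_eq_square field_simps)
    then show ?thesis using U s2 by simp
  qed
  obtain \<theta> where th: "cos \<theta> * a + sin \<theta> * b = s"
  proof (cases "w = 0")
    case True then show ?thesis using that[of 0] by (simp add: s_def w_def complex_eq_iff)
  next
    case False
    have cs: "cis (Arg w) = sgn w" using cis_Arg[OF False] .
    have c: "cos (Arg w) = a / s" "sin (Arg w) = b / s"
      using arg_cong[OF cs, of Re] arg_cong[OF cs, of Im]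
      by (simp_all add: sgn_div_norm w_def s_def divide_inverse mult.commute)
    have "s > 0" using False by (simp add: s_def)
    hence "cos (Arg w) * a + sin (Arg w) * b = s"
      unfolding c using s2 by (simp add: field_simps power2_eq_square)
    then show ?thesis by (rule that)
  qed
  have nsq: "(norm (p - (cis \<theta> * fst (cvec (U0,U1)), cis \<theta> * snd (cvec (U0,U1)))))^2 = NN p + 1 - 2 * s"
  proof -
    have "(norm (p - (cis \<theta> * fst (cvec (U0,U1)), cis \<theta> * snd (cvec (U0,U1)))))^2
      = (q0 p - cos \<theta> * U0)^2 + (p0 p - sin \<theta> * U0)^2 + (q1 p - cos \<theta> * U1)^2 + (p1 p - sin \<theta> * U1)^2"
      by (cases p) (simp add: norm_Pair cvec_def cmod_sq q0_def p0_def q1_def p1_def cis.ctr)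
    also have "\<dots> = NN p + (cos \<theta>^2 + sin \<theta>^2) * (U0^2 + U1^2) - 2*(cos \<theta> * a + sin \<theta> * b)"
      unfolding NN_def a_def b_def by (simp only: power2_eq_square algebra_simps)
    also have "\<dots> = NN p + 1 - 2 * s" using U th by simp
    finally show ?thesis .
  qed
  have "?I \<le> norm (p - (cis \<theta> * fst (cvec (U0,U1)), cis \<theta> * snd (cvec (U0,U1))))"
    by (rule cINF_lower) (auto intro: bdd_belowI[where m=0])
  also have "\<dots> = sqrt (NN p + 1 - 2 * s)" using nsq by (metis norm_ge_zero real_sqrt_unique)
  also have "\<dots> \<le> sqrt ((1 - ?m)^2 + \<bar>NN p - ?m\<bar>)"
  proof (rule real_sqrt_le_mono)
    have "NN p + 1 - 2 * s \<le> (1 - s^2)^2 + abs (NN p - s^2)" by (rule sq_le_lemma) (simp add: s_def)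
    then show "NN p + 1 - 2 * s \<le> (1 - ?m)^2 + \<bar>NN p - ?m\<bar>" by (simp only: sm)
  qed
  finally show ?thesis .
qed

lemma sign_lemma: fixes a z :: real assumes "\<bar>z - a\<bar> < \<bar>a\<bar>" shows "a * z > 0"
proof (cases "a > 0")
  case True then have "z > 0" using assms by linarith
  then show ?thesis using True by simp
next
  case False then have "a < 0" "z < 0" using assms by linarith+
  then show ?thesis by (simp add: mult_neg_neg)
qed

lemma isCont_epsD: fixes f :: "'a::metric_space \<Rightarrow> real"
  assumes "isCont f x" "e > 0"
  shows "\<exists>d>0. \<forall>y. dist y x < d \<longrightarrow> \<bar>f y - f x\<bar> < e"
  using assms unfolding continuous_at_eps_delta dist_real_def by blast

lemma cvec_vals:
  shows "NN (cvec (U0,U1)) = U0^2 + U1^2" "XX (cvec (U0,U1)) = 2*U0*U1"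
    "YY (cvec (U0,U1)) = 0" "ZZ (cvec (U0,U1)) = U0^2 - U1^2"
  by (simp_all add: cvec_def NN_def XX_def YY_def ZZ_def q0_def p0_def q1_def p1_def)

lemma isCont_comps [continuous_intros]:
  "continuous F f \<Longrightarrow> continuous F (\<lambda>x. q0 (f x))"
  "continuous F f \<Longrightarrow> continuous F (\<lambda>x. p0 (f x))"
  "continuous F f \<Longrightarrow> continuous F (\<lambda>x. q1 (f x))"
  "continuous F f \<Longrightarrow> continuous F (\<lambda>x. p1 (f x))"
  unfolding q0_def p0_def q1_def p1_def
  by (intro continuous_Re continuous_Im continuous_fst continuous_snd; assumption)+

lemma isCont_ZZ: "isCont ZZ x"
  unfolding ZZ_def by (intro continuous_intros)

lemma orbital_generic:
  fixes U0 U1 k :: real and Q :: "complex \<times> complex \<Rightarrow> real" and P :: "complex \<times> complex \<Rightarrow> bool"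
  assumes U: "U0^2 + U1^2 = 1"
    and Qc: "isCont Q (cvec (U0,U1))" and Q0: "Q (cvec (U0,U1)) = 0"
    and Pn: "\<exists>r>0. \<forall>p. norm (p - cvec (U0,U1)) < r \<longrightarrow> P p"
    and conf: "\<And>u t. solves_H k u \<Longrightarrow> P (u 0) \<Longrightarrow>
        (NN (u t) - 1)^2 + (XX (u t) - 2*U0*U1)^2 + (YY (u t))^2 \<le> Q (u 0)"
  shows "orbitally_stable k (U0,U1)"
  unfolding orbitally_stable_def
proof (intro allI impI)
  fix \<epsilon> :: real assume \<epsilon>: "\<epsilon> > 0"
  define xU where "xU = 2*U0*U1"
  define zU where "zU = U0^2 - U1^2"
  have "xU^2 + zU^2 = (U0^2+U1^2)^2" unfolding xU_def zU_def by (simp add: power2_eq_square algebra_simps)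
  hence xz: "xU^2 + zU^2 = 1" using U by simp
  define mf where "mf = (\<lambda>v::real\<times>real\<times>real. (fst v + xU * fst (snd v) + \<bar>zU\<bar> * sqrt ((fst v)^2 - (fst (snd v))^2 - (snd (snd v))^2)) / 2)"
  define F where "F = (\<lambda>v. (1 - mf v)^2 + \<bar>fst v - mf v\<bar>)"
  define H where "H = (\<lambda>v::real\<times>real\<times>real. (fst v)^2 - (fst (snd v))^2 - (snd (snd v))^2)"
  define P0 where "P0 = (1::real, xU, 0::real)"
  have HP0: "H P0 = zU^2" using xz by (simp add: H_def P0_def)
  have "mf P0 = (1 + xU^2 + \<bar>zU\<bar> * sqrt (zU^2)) / 2"
    using HP0 by (simp add: mf_def H_def P0_def power2_eq_square)
  also have "\<dots> = 1" using xz by (simp add: power2_eq_square)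
  finally have mP0: "mf P0 = 1" .
  have FP0: "F P0 = 0" unfolding F_def mP0 by (simp add: P0_def)
  have Fc: "isCont F P0" unfolding F_def mf_def by (intro continuous_intros) auto
  obtain \<eta>1 where \<eta>1: "\<eta>1 > 0" "\<And>v. dist v P0 < \<eta>1 \<Longrightarrow> F v < \<epsilon>^2"
    using isCont_epsD[OF Fc, of "\<epsilon>^2"] \<epsilon> FP0 by (auto simp: abs_less_iff)
  obtain \<eta>2 where \<eta>2: "\<eta>2 > 0" "zU \<noteq> 0 \<longrightarrow> (\<forall>v. dist v P0 < \<eta>2 \<longrightarrow> H v > 0)"
  proof (cases "zU = 0")
    case True then show ?thesis using that[of 1] by auto
  next
    case False
    have Hc: "isCont H P0" unfolding H_def by (intro continuous_intros)
    obtain d where "d > 0" "\<And>v. dist v P0 < d \<Longrightarrow> \<bar>H v - H P0\<bar> < zU^2"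
      using isCont_epsD[OF Hc, of "zU^2"] False by auto
    moreover have "zU^2 > 0" using False by simp
    ultimately show ?thesis using that[of d] HP0 by (auto simp: abs_less_iff)
  qed
  define \<eta> where "\<eta> = min \<eta>1 \<eta>2"
  have \<eta>pos: "\<eta> > 0" using \<eta>1 \<eta>2 by (simp add: \<eta>_def)
  obtain \<delta>1 where \<delta>1: "\<delta>1 > 0" "\<And>p. dist p (cvec (U0,U1)) < \<delta>1 \<Longrightarrow> Q p < \<eta>^2"
    using isCont_epsD[OF Qc, of "\<eta>^2"] \<eta>pos Q0 by (auto simp: abs_less_iff)
  obtain \<delta>3 where \<delta>3: "\<delta>3 > 0" "zU \<noteq> 0 \<longrightarrow> (\<forall>p. dist p (cvec (U0,U1)) < \<delta>3 \<longrightarrow> zU * ZZ p > 0)"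
  proof (cases "zU = 0")
    case True then show ?thesis using that[of 1] by auto
  next
    case False
    obtain d where "d > 0" "\<And>p. dist p (cvec (U0,U1)) < d \<Longrightarrow> \<bar>ZZ p - ZZ (cvec (U0,U1))\<bar> < \<bar>zU\<bar>"
      using isCont_epsD[OF isCont_ZZ, of "\<bar>zU\<bar>" "cvec (U0,U1)"] False by auto
    then show ?thesis using that[of d] sign_lemma cvec_vals(4)[of U0 U1] zU_def by metis
  qed
  obtain r where r: "r > 0" "\<And>p. norm (p - cvec (U0,U1)) < r \<Longrightarrow> P p" using Pn by blast
  define \<delta> where "\<delta> = min (min \<delta>1 \<delta>3) r / 2"
  show "\<exists>\<delta>>0. \<forall>u. solves_H k u \<and> norm (u 0 - cvec (U0, U1)) \<le> \<delta> \<longrightarrow>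
      (\<forall>t\<ge>0. (INF \<theta>::real. norm (u t - (cis \<theta> * fst (cvec (U0, U1)), cis \<theta> * snd (cvec (U0, U1))))) \<le> \<epsilon>)"
  proof (intro exI[of _ \<delta>] conjI allI impI)
    show "\<delta> > 0" using \<delta>1 \<delta>3 r by (simp add: \<delta>_def)
    fix u t assume ut: "solves_H k u \<and> norm (u 0 - cvec (U0, U1)) \<le> \<delta>" "(0::real) \<le> t"
    have sol: "solves_H k u" using ut by blast
    have n0: "norm (u 0 - cvec (U0, U1)) < \<delta>1" "norm (u 0 - cvec (U0, U1)) < \<delta>3"
       "norm (u 0 - cvec (U0, U1)) < r"
      using ut \<delta>1 \<delta>3 r unfolding \<delta>_def by linarith+
    have Pu: "P (u 0)" using r(2) n0 by blast
    have Qu: "Q (u 0) < \<eta>^2" using \<delta>1(2)[of "u 0"] n0 by (simp add: dist_norm)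
    define v where "v = (\<lambda>s. (NN (u s), XX (u s), YY (u s)))"
    have dv: "dist (v s) P0 < \<eta>" for s
    proof -
      have "dist (v s) P0 = sqrt ((NN (u s) - 1)^2 + (XX (u s) - xU)^2 + (YY (u s))^2)"
        by (simp add: v_def P0_def dist_Pair_Pair dist_real_def)
      also have "\<dots> \<le> sqrt (Q (u 0))" using conf[OF sol Pu, of s] by (simp add: xU_def)
      also have "\<dots> < sqrt (\<eta>^2)" by (rule real_sqrt_less_mono[OF Qu])
      also have "\<dots> = \<eta>" using \<eta>pos by simp
      finally show ?thesis .
    qed
    have Fv: "F (v s) < \<epsilon>^2" for s using \<eta>1(2)[OF less_le_trans[OF dv]] by (simp add: \<eta>_def)
    have Hv: "H (v s) = (ZZ (u s))^2" for s
      using stokes_id[of "u s"] by (simp add: H_def v_def)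
    have Hpos: "zU \<noteq> 0 \<Longrightarrow> ZZ (u s) \<noteq> 0" for s
    proof -
      assume "zU \<noteq> 0"
      moreover have "dist (v s) P0 < \<eta>2" using dv[of s] by (simp add: \<eta>_def)
      ultimately have "H (v s) > 0" using \<eta>2(2) by blast
      then show ?thesis using Hv[of s] by auto
    qed
    have cu: "isCont u s" for s
    proof -
      obtain d where "(u has_vector_derivative d) (at s)" using sol unfolding solves_H_def by blast
      then show ?thesis by (rule has_vector_derivative_continuous)
    qed
    have sgn: "zU * ZZ (u t) \<ge> 0"
    proof (rule ccontr)
      assume neg: "\<not> zU * ZZ (u t) \<ge> 0"
      hence zne: "zU \<noteq> 0" by auto
      have z0: "zU * ZZ (u 0) > 0" using \<delta>3(2) zne n0(2) unfolding dist_norm by blast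
      have gc: "continuous_on {0..t} (\<lambda>s. - (zU * ZZ (u s)))"
        by (intro continuous_at_imp_continuous_on ballI,
            unfold ZZ_def) (intro continuous_intros cu)
      obtain s where "0 \<le> s" "s \<le> t" "- (zU * ZZ (u s)) = 0"
        using IVT'[OF _ _ ut(2) gc, of 0] z0 neg by auto
      then show False using Hpos[OF zne, of s] zne by simp
    qed
    define m where "m = (NN (u t) + 2*U0*U1*XX (u t) + (U0^2-U1^2)*ZZ (u t))/2"
    have "mf (v t) = (NN (u t) + xU * XX (u t) + \<bar>zU\<bar> * sqrt ((ZZ (u t))^2)) / 2"
      using Hv[of t] by (simp add: mf_def H_def v_def)
    also have "\<bar>zU\<bar> * sqrt ((ZZ (u t))^2) = zU * ZZ (u t)"
      using sgn by (simp add: abs_mult[symmetric])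
    finally have mv: "mf (v t) = m" by (simp add: m_def xU_def zU_def)
    have "(INF \<theta>::real. norm (u t - (cis \<theta> * fst (cvec (U0, U1)), cis \<theta> * snd (cvec (U0, U1)))))
        \<le> sqrt ((1 - m)^2 + \<bar>NN (u t) - m\<bar>)" unfolding m_def by (rule dist_bound[OF U])
    also have "\<dots> = sqrt (F (v t))" unfolding F_def mv by (simp add: v_def)
    also have "\<dots> < sqrt (\<epsilon>^2)" by (rule real_sqrt_less_mono[OF Fv[of t]])
    also have "\<dots> = \<epsilon>" using \<epsilon> by simp
    finally show "(INF \<theta>::real. norm (u t - (cis \<theta> * fst (cvec (U0, U1)), cis \<theta> * snd (cvec (U0, U1))))) \<le> \<epsilon>"
      by simp
  qed
qed



lemma vector_4 [simp]:
 "(vector [x,y,z,w] ::('a::zero)^4)$1 = x"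
 "(vector [x,y,z,w] ::('a::zero)^4)$2 = y"
 "(vector [x,y,z,w] ::('a::zero)^4)$3 = z"
 "(vector [x,y,z,w] ::('a::zero)^4)$4 = w"
  unfolding vector_def by simp_all

lemma linL_mult:
  fixes k w U0 U1 :: real and v :: "complex^4"
  defines "M \<equiv> map_matrix complex_of_real (linL k w (U0,U1))"
  shows "(M *v v) $ 1 = of_real (1 + w - k*U0^2) * v$2 - v$4"
    "(M *v v) $ 2 = - of_real (1 + w - 3*k*U0^2) * v$1 + v$3"
    "(M *v v) $ 3 = - v$2 + of_real (1 + w - k*U1^2) * v$4"
    "(M *v v) $ 4 = v$1 - of_real (1 + w - 3*k*U1^2) * v$3"
  unfolding M_def
  by (simp_all add: matrix_vector_mult_def sum_4 linL_def matrix_def to_X_def from_X_def lin_rhs_def axis_def algebra_simps)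



lemma sq_real_nonpos_Re:
  fixes \<mu> :: complex and r :: real
  assumes "\<mu>^2 = of_real r" "r \<le> 0"
  shows "Re \<mu> = 0"
proof -
  have i: "2 * Re \<mu> * Im \<mu> = 0" and re: "(Re \<mu>)^2 - (Im \<mu>)^2 = r"
    using arg_cong[OF assms(1), of Im] arg_cong[OF assms(1), of Re]
    by (auto simp: power2_eq_square)
  show ?thesis
  proof (rule ccontr)
    assume "Re \<mu> \<noteq> 0"
    then have "Im \<mu> = 0" using i by simp
    then have "(Re \<mu>)^2 \<le> 0" using re assms(2) by simp
    then show False using \<open>Re \<mu> \<noteq> 0\<close> by simp
  qed
qed

lemma quad_real_nonpos:
  fixes L :: complex and t d :: real
  assumes eq: "L^2 + of_real t * L + of_real d = 0" and t: "t \<ge> 0" and d: "d \<ge> 0" and disc: "t^2 \<ge> 4*d"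
  shows "\<exists>r. L = of_real r \<and> r \<le> 0"
proof -
  define s where "s = sqrt (t^2/4 - d)"
  have s0: "s \<ge> 0" and s2: "s^2 = t^2/4 - d" using disc by (simp_all add: s_def)
  have "s^2 \<le> (t/2)^2" using s2 d by (simp add: power_divide)
  hence st: "s \<le> t/2" using t s0 by (simp add: power_mono_iff abs_le_square_iff)
  have "(L - of_real (s - t/2)) * (L - of_real (- s - t/2)) = L^2 + of_real t * L + of_real (t^2/4 - s^2)"
    by (simp add: algebra_simps power2_eq_square)
  also have "\<dots> = 0" using eq s2 by simp
  finally have "L - of_real (s - t/2) = 0 \<or> L - of_real (- s - t/2) = 0" by simp
  hence "L = of_real (s - t/2) \<or> L = of_real (- s - t/2)" by simp
  moreover have "s - t/2 \<le> 0" "- s - t/2 \<le> 0" using st s0 t by linarith+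
  ultimately show ?thesis by blast
qed

lemma spec_generic:
  fixes a0 a1 c0 c1 :: real and \<mu> x1 x2 x3 x4 :: complex
  assumes e1: "\<mu> * x1 = of_real a0 * x2 - x4" and e2: "\<mu> * x2 = - of_real c0 * x1 + x3"
    and e3: "\<mu> * x3 = - x2 + of_real a1 * x4" and e4: "\<mu> * x4 = x1 - of_real c1 * x3"
    and nz: "\<not> (x1 = 0 \<and> x2 = 0 \<and> x3 = 0 \<and> x4 = 0)"
    and t: "a0*c0 + a1*c1 + 2 \<ge> 0" and d: "(a0*a1-1)*(c0*c1-1) \<ge> 0"
    and disc: "(a0*c0 + a1*c1 + 2)^2 \<ge> 4*((a0*a1-1)*(c0*c1-1))"
  shows "Re \<mu> \<le> 0"
proof (cases "\<mu> = 0")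
  case True then show ?thesis by simp
next
  case False
  define L where "L = \<mu>^2"
  have f1: "L * x1 = - of_real (a0*c0+1) * x1 + of_real (a0 + c1) * x3"
  proof -
    have "L * x1 = \<mu> * (\<mu> * x1)" by (simp add: L_def power2_eq_square)
    also have "\<dots> = of_real a0 * (\<mu> * x2) - \<mu> * x4" unfolding e1 by (simp add: algebra_simps)
    also have "\<dots> = - of_real (a0*c0+1) * x1 + of_real (a0 + c1) * x3" unfolding e2 e4 by (simp add: algebra_simps)
    finally show ?thesis .
  qed
  have f3: "L * x3 = of_real (c0 + a1) * x1 - of_real (1 + a1*c1) * x3"
  proof -
    have "L * x3 = \<mu> * (\<mu> * x3)" by (simp add: L_def power2_eq_square)
    also have "\<dots> = - (\<mu> * x2) + of_real a1 * (\<mu> * x4)" unfolding e3 by (simp add: algebra_simps)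
    also have "\<dots> = of_real (c0 + a1) * x1 - of_real (1 + a1*c1) * x3" unfolding e2 e4 by (simp add: algebra_simps)
    finally show ?thesis .
  qed
  have nz13: "\<not> (x1 = 0 \<and> x3 = 0)"
  proof
    assume h: "x1 = 0 \<and> x3 = 0"
    then have "x2 = 0" using e2 False by simp
    moreover have "x4 = 0" using e4 h False by simp
    ultimately show False using nz h by simp
  qed
  define T where "T = a0*c0 + a1*c1 + 2"
  define D where "D = (a0*a1-1)*(c0*c1-1)"
  define P where "P = L^2 + of_real T * L + of_real D"
  have E1: "(of_real (- (a0*c0+1)) - L) * x1 + of_real (a0 + c1) * x3 = 0" using f1 by (simp add: algebra_simps)
  have E2: "of_real (c0 + a1) * x1 + (of_real (-(1 + a1*c1)) - L) * x3 = 0" using f3 by (simp add: algebra_simps)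
  have "P * x1 = (of_real (-(1 + a1*c1)) - L) * ((of_real (- (a0*c0+1)) - L) * x1 + of_real (a0 + c1) * x3)
      - of_real (a0 + c1) * (of_real (c0 + a1) * x1 + (of_real (-(1 + a1*c1)) - L) * x3)"
    unfolding P_def T_def D_def by (simp add: algebra_simps power2_eq_square)
  hence P1: "P * x1 = 0" using E1 E2 by simp
  have "P * x3 = (of_real (- (a0*c0+1)) - L) * (of_real (c0 + a1) * x1 + (of_real (-(1 + a1*c1)) - L) * x3)
      - of_real (c0 + a1) * ((of_real (- (a0*c0+1)) - L) * x1 + of_real (a0 + c1) * x3)"
    unfolding P_def T_def D_def by (simp add: algebra_simps power2_eq_square)
  hence P3: "P * x3 = 0" using E1 E2 by simp
  have "P = 0" using P1 P3 nz13 by auto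
  then obtain r where "L = of_real r" "r \<le> 0"
    using quad_real_nonpos[of L T D] t d disc unfolding P_def T_def D_def by auto
  then show ?thesis using sq_real_nonpos_Re[of \<mu> r] by (simp add: L_def)
qed



lemma spectral_from:
  fixes k w U0 U1 :: real
  assumes a: "(1 + w - k*U0^2) * (1 + w - k*U1^2) = 1"
    and t: "(1 + w - k*U0^2) * (1 + w - 3*k*U0^2) + (1 + w - k*U1^2) * (1 + w - 3*k*U1^2) + 2 \<ge> 0"
  shows "spectrally_stable k w (U0,U1)"
  unfolding spectrally_stable_def eigenvalue_real_matrix_def
proof (intro allI impI, elim exE conjE)
  fix \<mu> and v :: "complex^4"
  assume nz: "v \<noteq> 0" and ev: "map_matrix complex_of_real (linL k w (U0, U1)) *v v = \<mu> *s v"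
  note lm = linL_mult[of k w U0 U1 v]
  have c: "\<And>i. (map_matrix complex_of_real (linL k w (U0, U1)) *v v) $ i = \<mu> * v $ i"
    using ev by simp
  show "Re \<mu> \<le> 0"
  proof (rule spec_generic[of \<mu> "v$1" "1 + w - k*U0^2" "v$2" "v$4" "1 + w - 3*k*U0^2" "v$3"
          "1 + w - k*U1^2" "1 + w - 3*k*U1^2"])
    show "\<mu> * v $ 1 = complex_of_real (1 + w - k * U0\<^sup>2) * v $ 2 - v $ 4" using c[of 1] lm(1) by simp
    show "\<mu> * v $ 2 = - complex_of_real (1 + w - 3 * k * U0\<^sup>2) * v $ 1 + v $ 3" using c[of 2] lm(2) by simp
    show "\<mu> * v $ 3 = - v $ 2 + complex_of_real (1 + w - k * U1\<^sup>2) * v $ 4" using c[of 3] lm(3) by simp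
    show "\<mu> * v $ 4 = v $ 1 - complex_of_real (1 + w - 3 * k * U1\<^sup>2) * v $ 3" using c[of 4] lm(4) by simp
    show "\<not> (v $ 1 = 0 \<and> v $ 2 = 0 \<and> v $ 3 = 0 \<and> v $ 4 = 0)"
      using nz by (auto simp: vec_eq_iff forall_4)
  qed (use a t in simp_all)
qed

lemma NN_nonneg: "NN p \<ge> 0" by (simp add: NN_def)

lemma conf_i:
  fixes N X Y Z k :: real
  assumes id: "X^2 + Y^2 + Z^2 = N^2" and N: "N \<ge> 0" and k: "k \<ge> 0"
  shows "(N-1)^2 + (X+1)^2 + Y^2 \<le> 3*(N-1)^2 + 2*(X + k*Z^2/4 + N)^2 + 2*N*(X + k*Z^2/4 + N)"
proof -
  define C where "C = X + k*Z^2/4 + N"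
  have "X^2 \<le> N^2" using id zero_le_power2[of X] zero_le_power2[of Y] zero_le_power2[of Z] by linarith
  hence aX: "\<bar>X\<bar> \<le> N" using N by (simp add: power2_le_iff_abs_le)
  have kz: "k*Z^2/4 \<ge> 0" using k by simp
  have XN0: "0 \<le> X + N" and XNC: "X + N \<le> C" using aX kz by (auto simp: C_def)
  have "Y^2 \<le> N^2 - X^2" using id zero_le_power2[of X] zero_le_power2[of Y] zero_le_power2[of Z] by linarith
  also have "\<dots> = (N - X) * (N + X)" by (simp add: power2_eq_square algebra_simps)
  also have "\<dots> \<le> (2*N) * C" using aX XN0 XNC N by (intro mult_mono) auto
  finally have Y2: "Y^2 \<le> 2*N*C" by simp
  have "(X+1)^2 \<le> 2*(X+N)^2 + 2*(N-1)^2"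
  proof -
    have "2*(X+N)^2 + 2*(N-1)^2 - (X+1)^2 = (X + 2*N - 1)^2" by (simp add: power2_eq_square algebra_simps)
    thus ?thesis using zero_le_power2[of "X + 2*N - 1"] zero_le_power2[of "N - 1 + e"] by linarith
  qed
  moreover have "(X+N)^2 \<le> C^2" using XN0 XNC by (simp add: power_mono)
  ultimately show ?thesis using Y2 unfolding C_def[symmetric] by linarith
qed

lemma conf_ii:
  fixes N X Y Z k :: real
  assumes id: "X^2 + Y^2 + Z^2 = N^2" and N: "N \<ge> 0" and k: "0 < k" "k < 2" and Nb: "N < 1/2 + 1/k"
  shows "(N-1)^2 + (X-1)^2 + Y^2 \<le> 3*(N-1)^2 + 2*((N - (X + k*Z^2/4)) / ((2-k)/4))^2
            + 2*N*((N - (X + k*Z^2/4)) / ((2-k)/4))"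
proof -
  define s0 where "s0 = (2-k)/4"
  define D where "D = N - (X + k*Z^2/4)"
  define e where "e = N - X"
  have s0p: "s0 > 0" using k by (simp add: s0_def)
  have "X^2 \<le> N^2" using id zero_le_power2[of X] zero_le_power2[of Y] zero_le_power2[of Z] by linarith
  hence aX: "\<bar>X\<bar> \<le> N" using N by (simp add: power2_le_iff_abs_le)
  have e0: "e \<ge> 0" using aX by (simp add: e_def)
  have NX: "0 \<le> N + X" "N + X \<le> 2*N" using aX by auto
  have Z2: "Z^2 \<le> e * (N + X)"
  proof -
    have "Z^2 \<le> N^2 - X^2" using id zero_le_power2[of X] zero_le_power2[of Y] zero_le_power2[of Z] by linarith
    also have "\<dots> = e * (N + X)" by (simp add: e_def power2_eq_square algebra_simps)
    finally show ?thesis .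
  qed
  have Y2: "Y^2 \<le> e * (N + X)"
  proof -
    have "Y^2 \<le> N^2 - X^2" using id zero_le_power2[of X] zero_le_power2[of Y] zero_le_power2[of Z] by linarith
    also have "\<dots> = e * (N + X)" by (simp add: e_def power2_eq_square algebra_simps)
    finally show ?thesis .
  qed
  have "k*Z^2/4 \<le> k * (e * (2*N)) / 4"
    using Z2 NX k e0 by (intro divide_right_mono mult_left_mono order_trans[OF _ mult_left_mono[of "N+X" "2*N" e]]) auto
  hence "D \<ge> e * (1 - k*N/2)" by (simp add: D_def e_def algebra_simps)
  moreover have "1 - k*N/2 \<ge> s0"
  proof -
    have "k*N < k*(1/2 + 1/k)" using Nb k by simp
    also have "\<dots> = k/2 + 1" using k by (simp add: algebra_simps)
    finally have h: "k*N < k/2 + 1" .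
    then show ?thesis unfolding s0_def by (simp add: field_simps)
  qed
  moreover have "e * s0 \<le> e * (1 - k*N/2)" using calculation(2) e0 by (rule mult_left_mono)
  ultimately have "D \<ge> e * s0" by linarith
  hence eD: "e \<le> D / s0" using s0p by (simp add: pos_le_divide_eq)
  have "Y^2 \<le> 2*N*(D/s0)"
  proof -
    have "e * (N + X) \<le> e * (2*N)" using NX(2) e0 by (rule mult_left_mono)
    hence "Y^2 \<le> e * (2*N)" using Y2 by linarith
    also have "\<dots> \<le> (D/s0) * (2*N)" using eD N by (intro mult_right_mono) auto
    finally show ?thesis by (simp add: algebra_simps)
  qed
  moreover have "(X-1)^2 \<le> 2*(N-1)^2 + 2*e^2"
  proof -
    have "2*(N-1)^2 + 2*e^2 - (X-1)^2 = (N - 1 + e)^2" by (simp add: e_def power2_eq_square algebra_simps)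
    thus ?thesis using zero_le_power2[of "X + 2*N - 1"] zero_le_power2[of "N - 1 + e"] by linarith
  qed
  moreover have "e^2 \<le> (D/s0)^2" using e0 eD by (simp add: power_mono)
  ultimately show ?thesis unfolding D_def[symmetric] s0_def[symmetric] by linarith
qed

lemma conf_iii:
  fixes N X Y Z k :: real
  assumes id: "X^2 + Y^2 + Z^2 = N^2" and k: "k > 0"
  shows "(N-1)^2 + (X - 2/k)^2 + Y^2 = (N-1)^2 + 4/k * (1/k + k*N^2/4 - (X + k*Z^2/4))"
proof -
  have z: "Z^2 = N^2 - X^2 - Y^2" using id by simp
  show ?thesis unfolding z using k by (simp add: field_simps power2_eq_square)
qed



lemma ab_facts:
  fixes k \<tau> :: real
  assumes k: "k > 2" and tau: "\<tau> \<in> {1, -1}"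
  shows "(alpha k \<tau>)^2 + (beta k \<tau>)^2 = 1" "alpha k \<tau> * beta k \<tau> = 1/k"
proof -
  define a where "a = sqrt (k+2)"
  define b where "b = sqrt (k-2)"
  define s where "s = sqrt k"
  have t2: "\<tau>^2 = 1" using tau by auto
  have a2: "a^2 = k+2" and b2: "b^2 = k-2" and s2: "s^2 = k" and sp: "s > 0"
    using k by (simp_all add: a_def b_def s_def)
  have al: "alpha k \<tau> = (a - \<tau>*b)/(2* s)" and be: "beta k \<tau> = (a + \<tau>*b)/(2* s)"
    by (simp_all add: alpha_def beta_def a_def b_def s_def)
  have "(alpha k \<tau>)^2 + (beta k \<tau>)^2 = ((a - \<tau>*b)^2 + (a + \<tau>*b)^2) / ((2 * s)^2)"
    unfolding al be by (simp only: power_divide add_divide_distrib[symmetric])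
  also have "\<dots> = (2*a^2 + 2*\<tau>^2*b^2) / (4* s^2)"
    by (simp add: power2_eq_square algebra_simps)
  also have "\<dots> = 1" using k unfolding a2 b2 s2 t2 by simp
  finally show "(alpha k \<tau>)^2 + (beta k \<tau>)^2 = 1" .
  have "alpha k \<tau> * beta k \<tau> = ((a - \<tau>*b) * (a + \<tau>*b)) / ((2 * s) * (2 * s))"
    unfolding al be by simp
  also have "\<dots> = (a^2 - \<tau>^2*b^2) / (4* s^2)"
    by (simp add: power2_eq_square algebra_simps)
  also have "\<dots> = 1/k" using k unfolding a2 b2 s2 t2 by simp
  finally show "alpha k \<tau> * beta k \<tau> = 1/k" .
qed

lemma inv_sqrt2_sq: "(1 / sqrt 2)^2 = (1/2::real)" "(- 1 / sqrt 2)^2 = (1/2::real)"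
  by (simp_all add: power_divide)

lemma inv_sqrt2_prod: "2 * (1 / sqrt 2) * (- 1 / sqrt 2) = (-1::real)" "2 * (1 / sqrt 2) * (1 / sqrt 2) = (1::real)"
  by (simp_all add: field_simps)

lemma spec_i: "spectrally_stable k (k/2 - 2) (1 / sqrt 2, - 1 / sqrt 2)" if "k > 0"
  by (rule spectral_from) (use that in \<open>simp_all add: inv_sqrt2_sq algebra_simps\<close>)

lemma spec_ii: "spectrally_stable k (k/2) (1 / sqrt 2, 1 / sqrt 2)" if "k > 0" "k < 2"
  by (rule spectral_from) (use that in \<open>simp_all add: inv_sqrt2_sq algebra_simps\<close>)

lemma spec_iii: "spectrally_stable k (k - 1) (alpha k \<tau>, beta k \<tau>)" if "k > 2" "\<tau> \<in> {1,-1}"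
proof (rule spectral_from)
  define A where "A = (alpha k \<tau>)^2"
  define B where "B = (beta k \<tau>)^2"
  have AB: "A + B = 1" using ab_facts[OF that] by (simp add: A_def B_def)
  have "A * B = (alpha k \<tau> * beta k \<tau>)^2" by (simp add: A_def B_def power_mult_distrib)
  hence kAB: "k^2 * (A*B) = 1" using ab_facts[OF that] that by (simp add: power_divide)
  have "(1 + (k - 1) - k * A) * (1 + (k - 1) - k * B) = k^2*(A*B) + k^2 * (1 - A - B)"
    by (simp add: algebra_simps power2_eq_square)
  also have "\<dots> = 1" using AB kAB by simp
  finally show "(1 + (k - 1) - k * (alpha k \<tau>)\<^sup>2) * (1 + (k - 1) - k * (beta k \<tau>)\<^sup>2) = 1"
    by (simp add: A_def B_def)
  have "(1 + (k - 1) - k * A) * (1 + (k - 1) - 3 * k * A) + (1 + (k - 1) - k * B) * (1 + (k - 1) - 3 * k * B) + 2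
     = k^2 * (2 - 4*(A+B) + 3*(A+B)^2) - 6 * (k^2 * (A*B)) + 2"
    by (simp add: algebra_simps power2_eq_square)
  also have "\<dots> = k^2 - 4" using AB kAB by simp
  also have "\<dots> = (k-2)*(k+2)" by (simp add: power2_eq_square algebra_simps)
  also have "\<dots> \<ge> 0" using that by simp
  finally show "0 \<le> (1 + (k - 1) - k * (alpha k \<tau>)\<^sup>2) * (1 + (k - 1) - 3 * k * (alpha k \<tau>)\<^sup>2) +
        (1 + (k - 1) - k * (beta k \<tau>)\<^sup>2) * (1 + (k - 1) - 3 * k * (beta k \<tau>)\<^sup>2) + 2"
    by (simp add: A_def B_def)
qed

lemma orb_i: "orbitally_stable k (1 / sqrt 2, - 1 / sqrt 2)" if k: "k > 0"
proof -
  define C where "C p = GG k p + NN p" for p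
  define Q where "Q p = 3*(NN p - 1)^2 + 2*(C p)^2 + 2*NN p*C p" for p
  show ?thesis
  proof (rule orbital_generic[where Q=Q and P="\<lambda>_. True"])
    show "(1 / sqrt 2)\<^sup>2 + (- 1 / sqrt 2)\<^sup>2 = (1::real)" by (simp add: inv_sqrt2_sq)
    show "isCont Q (cvec (1 / sqrt 2, - 1 / sqrt 2))"
      unfolding Q_def C_def GG_def NN_def XX_def ZZ_def by (intro continuous_intros) auto
    show "Q (cvec (1 / sqrt 2, - 1 / sqrt 2)) = 0"
      unfolding Q_def C_def GG_def using cvec_vals[of "1 / sqrt 2" "- 1 / sqrt 2"]
      by (simp add: inv_sqrt2_sq inv_sqrt2_prod)
    show "\<exists>r>0. \<forall>p. norm (p - cvec (1 / sqrt 2, - 1 / sqrt 2)) < r \<longrightarrow> True" using zero_less_one by blast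
    fix u t assume sol: "solves_H k u"
    have "(NN (u t) - 1)\<^sup>2 + (XX (u t) - 2 * (1 / sqrt 2) * (- 1 / sqrt 2))\<^sup>2 + (YY (u t))\<^sup>2
        = (NN (u t) - 1)\<^sup>2 + (XX (u t) + 1)\<^sup>2 + (YY (u t))\<^sup>2" by (simp add: inv_sqrt2_prod)
    also have "\<dots> \<le> Q (u t)"
      unfolding Q_def C_def GG_def
      using conf_i[OF stokes_id[of "u t"] NN_nonneg] k by (simp add: add.commute add.left_commute)
    also have "\<dots> = Q (u 0)" unfolding Q_def C_def using conserved[OF sol, of t] by simp
    finally show "(NN (u t) - 1)\<^sup>2 + (XX (u t) - 2 * (1 / sqrt 2) * (- 1 / sqrt 2))\<^sup>2 + (YY (u t))\<^sup>2 \<le> Q (u 0)" .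
  qed
qed

lemma orb_ii: "orbitally_stable k (1 / sqrt 2, 1 / sqrt 2)" if k: "k > 0" "k < 2"
proof -
  define D where "D p = NN p - GG k p" for p
  define Q where "Q p = 3*(NN p - 1)^2 + 2*(D p / ((2-k)/4))^2 + 2*NN p*(D p / ((2-k)/4))" for p
  show ?thesis
  proof (rule orbital_generic[where Q=Q and P="\<lambda>p. NN p < 1/2 + 1/k"])
    show "(1 / sqrt 2)\<^sup>2 + (1 / sqrt 2)\<^sup>2 = (1::real)" by (simp add: inv_sqrt2_sq)
    show "isCont Q (cvec (1 / sqrt 2, 1 / sqrt 2))"
      unfolding Q_def D_def GG_def NN_def XX_def ZZ_def by (intro continuous_intros) (use k in auto)
    show "Q (cvec (1 / sqrt 2, 1 / sqrt 2)) = 0"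
      unfolding Q_def D_def GG_def using cvec_vals[of "1 / sqrt 2" "1 / sqrt 2"]
      by (simp add: inv_sqrt2_sq inv_sqrt2_prod)
    show "\<exists>r>0. \<forall>p. norm (p - cvec (1 / sqrt 2, 1 / sqrt 2)) < r \<longrightarrow> NN p < 1/2 + 1/k"
    proof -
      have c: "isCont NN (cvec (1 / sqrt 2, 1 / sqrt 2))" unfolding NN_def by (intro continuous_intros)
      have e: "1/k - 1/2 > 0" using k by (simp add: field_simps)
      obtain d where "d > 0" "\<And>p. dist p (cvec (1 / sqrt 2, 1 / sqrt 2)) < d \<Longrightarrow>
          \<bar>NN p - NN (cvec (1 / sqrt 2, 1 / sqrt 2))\<bar> < 1/k - 1/2"
        using isCont_epsD[OF c e] by blast
      moreover have "NN (cvec (1 / sqrt 2, 1 / sqrt 2)) = 1"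
        using cvec_vals[of "1 / sqrt 2" "1 / sqrt 2"] by (simp add: inv_sqrt2_sq)
      ultimately show ?thesis
      proof (intro exI[of _ d] conjI allI impI)
        fix p assume h: "norm (p - cvec (1 / sqrt 2, 1 / sqrt 2)) < d"
          and d2: "\<And>p. dist p (cvec (1 / sqrt 2, 1 / sqrt 2)) < d \<Longrightarrow>
          \<bar>NN p - NN (cvec (1 / sqrt 2, 1 / sqrt 2))\<bar> < 1/k - 1/2"
          and n1: "NN (cvec (1 / sqrt 2, 1 / sqrt 2)) = 1"
        have "\<bar>NN p - 1\<bar> < 1/k - 1/2" using d2[of p] h n1 by (simp add: dist_norm)
        then show "NN p < 1/2 + 1/k" by linarith
      qed
    qed
    fix u t assume sol: "solves_H k u" and P: "NN (u 0) < 1/2 + 1/k"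
    have "(NN (u t) - 1)\<^sup>2 + (XX (u t) - 2 * (1 / sqrt 2) * (1 / sqrt 2))\<^sup>2 + (YY (u t))\<^sup>2
        = (NN (u t) - 1)\<^sup>2 + (XX (u t) - 1)\<^sup>2 + (YY (u t))\<^sup>2" by (simp add: inv_sqrt2_prod)
    also have "\<dots> \<le> Q (u t)"
      unfolding Q_def D_def GG_def
      using conf_ii[OF stokes_id[of "u t"] NN_nonneg k] P conserved(1)[OF sol, of t] by simp
    also have "\<dots> = Q (u 0)" unfolding Q_def D_def using conserved[OF sol, of t] by simp
    finally show "(NN (u t) - 1)\<^sup>2 + (XX (u t) - 2 * (1 / sqrt 2) * (1 / sqrt 2))\<^sup>2 + (YY (u t))\<^sup>2 \<le> Q (u 0)" .
  qed
qed

lemma orb_iii: "orbitally_stable k (alpha k \<tau>, beta k \<tau>)" if k: "k > 2" and tau: "\<tau> \<in> {1,-1}"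
proof -
  note ab = ab_facts[OF k tau]
  define Q where "Q p = (NN p - 1)^2 + 4/k * (1/k + k*(NN p)^2/4 - GG k p)" for p
  show ?thesis
  proof (rule orbital_generic[where Q=Q and P="\<lambda>_. True"])
    show "(alpha k \<tau>)\<^sup>2 + (beta k \<tau>)\<^sup>2 = 1" by (rule ab(1))
    show "isCont Q (cvec (alpha k \<tau>, beta k \<tau>))"
      unfolding Q_def GG_def NN_def XX_def ZZ_def by (intro continuous_intros) auto
    show "Q (cvec (alpha k \<tau>, beta k \<tau>)) = 0"
    proof -
      let ?p = "cvec (alpha k \<tau>, beta k \<tau>)"
      have n: "NN ?p = 1" and x: "XX ?p = 2/k" and y: "YY ?p = 0"
        using cvec_vals[of "alpha k \<tau>" "beta k \<tau>"] ab by simp_all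
      have z: "(ZZ ?p)^2 = 1 - 4/k^2" using stokes_id[of ?p] unfolding n x y by (simp add: power_divide)
      show ?thesis unfolding Q_def GG_def n x z using k by (simp add: field_simps power2_eq_square)
    qed
    show "\<exists>r>0. \<forall>p. norm (p - cvec (alpha k \<tau>, beta k \<tau>)) < r \<longrightarrow> True" using zero_less_one by blast
    fix u t assume sol: "solves_H k u"
    have "(NN (u t) - 1)\<^sup>2 + (XX (u t) - 2 * alpha k \<tau> * beta k \<tau>)\<^sup>2 + (YY (u t))\<^sup>2 = Q (u t)"
      unfolding Q_def GG_def using conf_iii[OF stokes_id[of "u t"]] k ab(2) by (simp add: mult.assoc)
    also have "\<dots> = Q (u 0)" unfolding Q_def using conserved[OF sol, of t] by simp
    finally show "(NN (u t) - 1)\<^sup>2 + (XX (u t) - 2 * alpha k \<tau> * beta k \<tau>)\<^sup>2 + (YY (u t))\<^sup>2 \<le> Q (u 0)" by simp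
  qed
qed

theorem mainTheorem1:
  fixes \<kappa> :: real
  assumes "\<kappa> > 0"
  shows "(spectrally_stable \<kappa> (\<kappa>/2 - 2) (1 / sqrt 2, - 1 / sqrt 2)
            \<and> orbitally_stable \<kappa> (1 / sqrt 2, - 1 / sqrt 2))
       \<and> (\<kappa> < 2 \<longrightarrow> spectrally_stable \<kappa> (\<kappa>/2) (1 / sqrt 2, 1 / sqrt 2)
            \<and> orbitally_stable \<kappa> (1 / sqrt 2, 1 / sqrt 2))
       \<and> (\<kappa> > 2 \<longrightarrow> (\<forall>\<tau>\<in>{1, -1::real}.
            spectrally_stable \<kappa> (\<kappa> - 1) (alpha \<kappa> \<tau>, beta \<kappa> \<tau>)
            \<and> orbitally_stable \<kappa> (alpha \<kappa> \<tau>, beta \<kappa> \<tau>)))"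
  using assms spec_i orb_i spec_ii orb_ii spec_iii orb_iii by blast

thm_deps mainTheorem1

end
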